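(* For every $P$-point ultrafilter $U$ on $\omega$, the space $S_\omega$ is $U$-selective: for every lower semicontinuous $\varphi:Y_U\rightarrow\mathcal{F}(S_\omega)$ there is a continuous $s:Y_U\rightarrow S_\omega$ with $s(y)\in\varphi(y)$ for all $y\in Y_U$.
   Context: $\mathcal{F}(X)$ denotes the set of nonempty closed subsets of a space $X$; a map $\varphi:Y\rightarrow\mathcal{F}(X)$ is lower semicontinuous if for every open $W\subseteq X$ the set $\{y:\varphi(y)\cap W\neq\emptyset\}$ is open in $Y$. For a filter $F$ on $\omega$, $Y_F$ is the space on $\omega\cup\{\infty\}$ with points of $\omega$ isolated and neighborhoods of $\infty$ the sets $A\cup\{\infty\}$, $A\in F$. An ultrafilter $U$ on $\omega$ is a $P$-point if every function $\omega\rightarrow\omega$ is either constant or finite-to-one on some set in $U$. $S_\omega$ is the space on $(\omega\times\omega)\cup\{\infty\}$ in which points of $\omega\times\omega$ are isolated and a set containing $\infty$ is a neighborhood of $\infty$ iff it contains all but finitely many points of each spine $\{m\}\times\omega$; equivalently, a neighborhood base at $\infty$ is given by the sets $W_f=\{\infty\}\cup\{(m,n):n>f(m)\}$ for $f\in{}^\omega\omega$. *)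

theory Defs
  imports "HOL-Analysis.Analysis"
begin

definition is_filter_on_nat :: "nat set set \<Rightarrow> bool" where
  "is_filter_on_nat F \<longleftrightarrow> UNIV \<in> F \<and> {} \<notin> F \<and>
     (\<forall>A B. A \<in> F \<longrightarrow> A \<subseteq> B \<longrightarrow> B \<in> F) \<and>
     (\<forall>A B. A \<in> F \<longrightarrow> B \<in> F \<longrightarrow> A \<inter> B \<in> F)"

definition is_ultrafilter_on_nat :: "nat set set \<Rightarrow> bool" where
  "is_ultrafilter_on_nat U \<longleftrightarrow> is_filter_on_nat U \<and> (\<forall>A. A \<in> U \<or> - A \<in> U)"

definition P_point :: "nat set set \<Rightarrow> bool" where
  "P_point U \<longleftrightarrow> is_ultrafilter_on_nat U \<and>
     (\<forall>f :: nat \<Rightarrow> nat. \<exists>A\<in>U. (\<exists>c. \<forall>n\<in>A. f n = c) \<or> (\<forall>k. finite {n\<in>A. f n = k}))"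

text \<open>The space Y_F on omega plus a point infinity (encoded as None): points Some n are
  isolated, neighbourhoods of None are the sets A \<union> {None} with A \<in> F.\<close>
definition Y_space :: "nat set set \<Rightarrow> nat option topology" where
  "Y_space F = topology (\<lambda>S. None \<in> S \<longrightarrow> {n. Some n \<in> S} \<in> F)"

text \<open>The sequential fan S_omega on omega \<times> omega plus infinity (encoded as None):
  points Some (m,n) isolated; a set containing None is open iff it contains all but
  finitely many points of each spine {m} \<times> omega.\<close>
definition S_omega :: "(nat \<times> nat) option topology" where
  "S_omega = topology (\<lambda>S. None \<in> S \<longrightarrow> (\<forall>m. finite {n. Some (m, n) \<notin> S}))"

definition lsc_closed_valued :: "'a topology \<Rightarrow> 'b topology \<Rightarrow> ('a \<Rightarrow> 'b set) \<Rightarrow> bool" where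
  "lsc_closed_valued Y X \<phi> \<longleftrightarrow>
     (\<forall>y\<in>topspace Y. closedin X (\<phi> y) \<and> \<phi> y \<noteq> {}) \<and>
     (\<forall>W. openin X W \<longrightarrow> openin Y {y \<in> topspace Y. \<phi> y \<inter> W \<noteq> {}})"

lemma istopology_Y_space:
  assumes "is_filter_on_nat F"
  shows "istopology (\<lambda>S. None \<in> S \<longrightarrow> {n. Some n \<in> S} \<in> F)"
proof -
  have up: "\<And>A B. A \<in> F \<Longrightarrow> A \<subseteq> B \<Longrightarrow> B \<in> F" and int: "\<And>A B. A \<in> F \<Longrightarrow> B \<in> F \<Longrightarrow> A \<inter> B \<in> F"
    using assms unfolding is_filter_on_nat_def by blast+
  show ?thesis unfolding istopology_def
  proof (intro conjI allI impI)
    fix S T assume S: "None \<in> S \<longrightarrow> {n. Some n \<in> S} \<in> F" and T: "None \<in> T \<longrightarrow> {n. Some n \<in> T} \<in> F"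
      and "None \<in> S \<inter> T"
    then have "{n. Some n \<in> S} \<inter> {n. Some n \<in> T} \<in> F" using int by blast
    moreover have "{n. Some n \<in> S} \<inter> {n. Some n \<in> T} = {n. Some n \<in> S \<inter> T}" by auto
    ultimately show "{n. Some n \<in> S \<inter> T} \<in> F" by simp
  next
    fix K assume K: "\<forall>S\<in>K. None \<in> S \<longrightarrow> {n. Some n \<in> S} \<in> F" and "None \<in> \<Union>K"
    then obtain S where "S \<in> K" "None \<in> S" by blast
    then have "{n. Some n \<in> S} \<in> F" using K by blast
    then show "{n. Some n \<in> \<Union>K} \<in> F" by (rule up) (use \<open>S \<in> K\<close> in auto)
  qed
qed

lemma istopology_S_omega:
  "istopology (\<lambda>S. None \<in> S \<longrightarrow> (\<forall>m. finite {n. Some (m, n) \<notin> (S::(nat\<times>nat) option set)}))"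
  unfolding istopology_def
proof (intro conjI allI impI)
  fix S T m assume "None \<in> S \<longrightarrow> (\<forall>m. finite {n. Some (m, n) \<notin> (S::(nat\<times>nat) option set)})"
    "None \<in> T \<longrightarrow> (\<forall>m. finite {n. Some (m, n) \<notin> T})" "None \<in> S \<inter> T"
  then have "finite ({n. Some (m, n) \<notin> S} \<union> {n. Some (m, n) \<notin> T})" by auto
  then show "finite {n. Some (m, n) \<notin> S \<inter> T}" by (rule finite_subset[rotated]) auto
next
  fix K :: "(nat\<times>nat) option set set" and m
  assume K: "\<forall>S\<in>K. None \<in> S \<longrightarrow> (\<forall>m. finite {n. Some (m, n) \<notin> S})" "None \<in> \<Union>K"
  then obtain S where "S \<in> K" "None \<in> S" by blast
  then have "finite {n. Some (m, n) \<notin> S}" using K by blast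
  then show "finite {n. Some (m, n) \<notin> \<Union>K}" by (rule finite_subset[rotated]) (use \<open>S \<in> K\<close> in auto)
qed

end

theory Submission
  imports Defs
begin

lemma openin_Y: "is_filter_on_nat F \<Longrightarrow> openin (Y_space F) S \<longleftrightarrow> (None \<in> S \<longrightarrow> {n. Some n \<in> S} \<in> F)"
  unfolding Y_space_def using istopology_Y_space by simp

lemma openin_S: "openin S_omega S \<longleftrightarrow> (None \<in> S \<longrightarrow> (\<forall>m. finite {n. Some (m, n) \<notin> S}))"
  unfolding S_omega_def using istopology_S_omega by simp

lemma topspace_Y: "is_filter_on_nat F \<Longrightarrow> topspace (Y_space F) = UNIV"
proof -
  assume F: "is_filter_on_nat F"
  have "openin (Y_space F) UNIV" using F by (simp add: openin_Y is_filter_on_nat_def)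
  then show ?thesis by (meson UNIV_I openin_subset subsetI subset_antisym)
qed

lemma topspace_S: "topspace S_omega = UNIV"
proof -
  have "openin S_omega UNIV" by (simp add: openin_S)
  then show ?thesis by (meson UNIV_I openin_subset subsetI subset_antisym)
qed

lemma cont_Y:
  assumes F: "is_filter_on_nat F"
    and H: "\<And>W. openin S_omega W \<Longrightarrow> s None \<in> W \<Longrightarrow> {n. s (Some n) \<in> W} \<in> F"
  shows "continuous_map (Y_space F) S_omega s"
  unfolding continuous_map_def topspace_Y[OF F] topspace_S
  using H by (auto simp: openin_Y[OF F])

lemma closed_S: "closedin S_omega X \<Longrightarrow> None \<notin> X \<Longrightarrow> finite {k. Some (m, k) \<in> X}"
  unfolding closedin_def topspace_S openin_S by (simp add: Compl_eq)

theorem mainTheorem2: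
  fixes U :: "nat set set"
  assumes "P_point U"
  shows "\<forall>\<phi> :: nat option \<Rightarrow> (nat \<times> nat) option set.
           lsc_closed_valued (Y_space U) S_omega \<phi> \<longrightarrow>
           (\<exists>s. continuous_map (Y_space U) S_omega s \<and>
                (\<forall>y\<in>topspace (Y_space U). s y \<in> \<phi> y))"
proof (intro allI impI)
  fix \<phi> :: "nat option \<Rightarrow> (nat \<times> nat) option set"
  assume lsc: "lsc_closed_valued (Y_space U) S_omega \<phi>"
  have uf: "is_ultrafilter_on_nat U" and pp: "\<And>f :: nat \<Rightarrow> nat. \<exists>A\<in>U. (\<exists>c. \<forall>n\<in>A. f n = c) \<or> (\<forall>k. finite {n\<in>A. f n = k})"
    using assms unfolding P_point_def by auto
  have F: "is_filter_on_nat U" using uf unfolding is_ultrafilter_on_nat_def by auto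
  have up: "\<And>A B. A \<in> U \<Longrightarrow> A \<subseteq> B \<Longrightarrow> B \<in> U"
    and int: "\<And>A B. A \<in> U \<Longrightarrow> B \<in> U \<Longrightarrow> A \<inter> B \<in> U"
    and emp: "{} \<notin> U"
    using F unfolding is_filter_on_nat_def by blast+
  have ult: "\<And>A. A \<in> U \<or> - A \<in> U" using uf unfolding is_ultrafilter_on_nat_def by auto
  have TY: "topspace (Y_space U) = UNIV" by (rule topspace_Y[OF F])
  have ne: "\<And>y. \<phi> y \<noteq> {}" and cl: "\<And>y. closedin S_omega (\<phi> y)"
    using lsc unfolding lsc_closed_valued_def TY by auto
  have lsc': "\<And>W. openin S_omega W \<Longrightarrow> \<phi> None \<inter> W \<noteq> {} \<Longrightarrow> {n. \<phi> (Some n) \<inter> W \<noteq> {}} \<in> U"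
  proof -
    fix W assume "openin S_omega W" "\<phi> None \<inter> W \<noteq> {}"
    then have "openin (Y_space U) {y. \<phi> y \<inter> W \<noteq> {}}"
      using lsc unfolding lsc_closed_valued_def TY by auto
    then show "{n. \<phi> (Some n) \<inter> W \<noteq> {}} \<in> U" using \<open>\<phi> None \<inter> W \<noteq> {}\<close>
      by (simp add: openin_Y[OF F])
  qed
  define ch where "ch y = (SOME p. p \<in> \<phi> y)" for y
  have ch: "\<And>y. ch y \<in> \<phi> y" unfolding ch_def using ne by (simp add: some_in_eq)
  show "\<exists>s. continuous_map (Y_space U) S_omega s \<and> (\<forall>y\<in>topspace (Y_space U). s y \<in> \<phi> y)"
  proof (cases "\<exists>q. Some q \<in> \<phi> None")
    case True
    then obtain q where q: "Some q \<in> \<phi> None" by blast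
    have "openin S_omega {Some q}" by (simp add: openin_S)
    then have A: "{n. \<phi> (Some n) \<inter> {Some q} \<noteq> {}} \<in> U" using lsc' q by blast
    define s where "s y = (if Some q \<in> \<phi> y then Some q else ch y)" for y
    have "continuous_map (Y_space U) S_omega s"
    proof (rule cont_Y[OF F])
      fix W assume "openin S_omega W" "s None \<in> W"
      then have "Some q \<in> W" using q by (simp add: s_def)
      then show "{n. s (Some n) \<in> W} \<in> U"
        by (rule_tac up[OF A]) (auto simp: s_def)
    qed
    moreover have "\<forall>y\<in>topspace (Y_space U). s y \<in> \<phi> y" using ch by (simp add: s_def)
    ultimately show ?thesis by blast
  next
    case False
    then have N0: "None \<in> \<phi> None" using ne by (metis all_not_in_conv not_None_eq)
    show ?thesis
    proof (cases "{n. None \<in> \<phi> (Some n)} \<in> U")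
      case True
      define s where "s y = (if None \<in> \<phi> y then None else ch y)" for y
      have "continuous_map (Y_space U) S_omega s"
      proof (rule cont_Y[OF F])
        fix W assume "openin S_omega W" "s None \<in> W"
        then have "None \<in> W" using N0 by (simp add: s_def)
        then show "{n. s (Some n) \<in> W} \<in> U"
          by (rule_tac up[OF True]) (auto simp: s_def)
      qed
      moreover have "\<forall>y\<in>topspace (Y_space U). s y \<in> \<phi> y" using ch by (simp add: s_def)
      ultimately show ?thesis by blast
    next
      case False
      define C where "C = {n. None \<notin> \<phi> (Some n)}"
      have CC: "- {n. None \<in> \<phi> (Some n)} = C" unfolding C_def by auto
      have C: "C \<in> U" using False ult[of "{n. None \<in> \<phi> (Some n)}"] CC by simp
      have fin: "\<And>n m. n \<in> C \<Longrightarrow> finite {k. Some (m, k) \<in> \<phi> (Some n)}"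
        using closed_S cl unfolding C_def by blast
      define E where "E m K = {n. \<exists>k>K. Some (m, k) \<in> \<phi> (Some n)}" for m K
      have key: "\<exists>m0. \<forall>K. E m0 K \<in> U"
      proof (rule ccontr)
        assume "\<not> ?thesis"
        then have "\<forall>m. \<exists>K. E m K \<notin> U" by blast
        then obtain Kf where Kf: "\<And>m. E m (Kf m) \<notin> U" by metis
        define W0 where "W0 = insert None {Some (m, k) | m k. k > Kf m}"
        have "{k. Some (m, k) \<notin> W0} = {..Kf m}" for m by (auto simp: W0_def)
        then have "openin S_omega W0" by (simp add: openin_S W0_def)
        moreover have "\<phi> None \<inter> W0 \<noteq> {}" using N0 unfolding W0_def by blast
        ultimately have B: "{n. \<phi> (Some n) \<inter> W0 \<noteq> {}} \<in> U" by (rule lsc')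
        define B' where "B' = {n. \<phi> (Some n) \<inter> W0 \<noteq> {}} \<inter> C"
        have B': "B' \<in> U" unfolding B'_def by (rule int[OF B C])
        have inE: "\<exists>m. n \<in> E m (Kf m)" if nB: "n \<in> B'" for n
        proof -
          obtain p where p: "p \<in> \<phi> (Some n)" "p \<in> W0" using nB unfolding B'_def by blast
          have "None \<notin> \<phi> (Some n)" using nB unfolding B'_def C_def by blast
          with p have "p \<noteq> None" by metis
          then show ?thesis using p by (auto simp: W0_def E_def)
        qed
        define a where "a n = (LEAST m. n \<in> E m (Kf m))" for n
        have aE: "n \<in> E (a n) (Kf (a n))" if "n \<in> B'" for n
          unfolding a_def using inE[OF that] by (metis LeastI)
        have aL: "n \<notin> E m (Kf m)" if "m < a n" for n m
          using that unfolding a_def using not_less_Least by blast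
        obtain A where A: "A \<in> U" and Ac: "(\<exists>c. \<forall>n\<in>A. a n = c) \<or> (\<forall>k. finite {n\<in>A. a n = k})"
          using pp[of a] by blast
        define A' where "A' = A \<inter> B'"
        have A': "A' \<in> U" unfolding A'_def by (rule int[OF A B'])
        show False
          using Ac
        proof
          assume "\<exists>c. \<forall>n\<in>A. a n = c"
          then obtain c where c: "\<And>n. n \<in> A \<Longrightarrow> a n = c" by blast
          have "A' \<subseteq> E c (Kf c)" using aE c unfolding A'_def by force
          then show False using up[OF A'] Kf by blast
        next
          assume fa: "\<forall>k. finite {n\<in>A. a n = k}"
          define G where "G m = {n\<in>A'. a n \<le> m}" for m
          have finG: "finite (G m)" for m
          proof -
            have "G m \<subseteq> (\<Union>j\<le>m. {n\<in>A. a n = j})" unfolding G_def A'_def by auto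
            then show ?thesis using fa by (meson finite_UN_I finite_atMost finite_subset)
          qed
          define H where "H m = insert 0 (\<Union>n\<in>G m. {k. Some (m, k) \<in> \<phi> (Some n)})" for m
          have finH: "finite (H m)" for m
            unfolding H_def using finG fin unfolding G_def A'_def B'_def by auto
          define f' where "f' m = Kf m + Max (H m)" for m
          define W' where "W' = insert None {Some (m, k) | m k. k > f' m}"
          have "{k. Some (m, k) \<notin> W'} = {..f' m}" for m by (auto simp: W'_def)
          then have "openin S_omega W'" by (simp add: openin_S W'_def)
          moreover have "\<phi> None \<inter> W' \<noteq> {}" using N0 unfolding W'_def by blast
          ultimately have B2: "{n. \<phi> (Some n) \<inter> W' \<noteq> {}} \<in> U" by (rule lsc')
          have "A' \<inter> {n. \<phi> (Some n) \<inter> W' \<noteq> {}} \<noteq> {}" using int[OF A' B2] emp by metis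
          then obtain n p where n: "n \<in> A'" and p: "p \<in> \<phi> (Some n)" "p \<in> W'" by blast
          have "None \<notin> \<phi> (Some n)" using n unfolding A'_def B'_def C_def by blast
          with p have "p \<noteq> None" by metis
          then obtain m k where pk: "p = Some (m, k)" "k > f' m" using p(2) unfolding W'_def by auto
          show False
          proof (cases "m < a n")
            case True
            then have "n \<notin> E m (Kf m)" by (rule aL)
            moreover have "k > Kf m" using pk unfolding f'_def by simp
            ultimately show False using p pk unfolding E_def by blast
          next
            case False
            then have "n \<in> G m" using n unfolding G_def by simp
            then have "k \<in> H m" using p pk unfolding H_def by blast
            then have "k \<le> Max (H m)" using finH by simp
            then show False using pk unfolding f'_def by simp
          qed
        qed
      qed
      then obtain m0 where m0: "\<And>K. E m0 K \<in> U" by blast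
      define b where "b n = Max {k. Some (m0, k) \<in> \<phi> (Some n)}" for n
      define s where "s y = (case y of None \<Rightarrow> None | Some n \<Rightarrow>
          (if n \<in> C \<and> (\<exists>k. Some (m0, k) \<in> \<phi> (Some n)) then Some (m0, b n) else ch (Some n)))" for y
      have "continuous_map (Y_space U) S_omega s"
      proof (rule cont_Y[OF F])
        fix W assume W: "openin S_omega W" "s None \<in> W"
        then have "None \<in> W" by (simp add: s_def)
        then have "finite {k. Some (m0, k) \<notin> W}" using W(1) unfolding openin_S by blast
        then obtain K where K0: "\<forall>k\<in>{k. Some (m0, k) \<notin> W}. k \<le> K"
          unfolding finite_nat_set_iff_bounded_le by blast
        have K: "\<And>k. Some (m0, k) \<notin> W \<Longrightarrow> k \<le> K" using K0 by simp
        have "C \<inter> E m0 K \<subseteq> {n. s (Some n) \<in> W}"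
        proof
          fix n assume n: "n \<in> C \<inter> E m0 K"
          then obtain k where k: "k > K" "Some (m0, k) \<in> \<phi> (Some n)" unfolding E_def by auto
          have "k \<le> b n" unfolding b_def using fin n k by (auto intro: Max_ge)
          then have "Some (m0, b n) \<in> W" using K[of "b n"] k(1) by linarith
          then show "n \<in> {n. s (Some n) \<in> W}" using n k by (auto simp: s_def)
        qed
        then show "{n. s (Some n) \<in> W} \<in> U" using up int C m0 by blast
      qed
      moreover have "\<forall>y\<in>topspace (Y_space U). s y \<in> \<phi> y"
      proof
        fix y show "s y \<in> \<phi> y"
        proof (cases y)
          case None then show ?thesis using N0 by (simp add: s_def)
        next
          case (Some n)
          show ?thesis
          proof (cases "n \<in> C \<and> (\<exists>k. Some (m0, k) \<in> \<phi> (Some n))")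
            case True
            then have "b n \<in> {k. Some (m0, k) \<in> \<phi> (Some n)}"
              unfolding b_def using fin by (intro Max_in) auto
            then show ?thesis using True Some by (simp add: s_def)
          next
            case False then show ?thesis using Some ch by (simp add: s_def)
          qed
        qed
      qed
      ultimately show ?thesis by blast
    qed
  qed
qed

end
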